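(* The set \[ \left\{\frac{x}{\big(\mu_{\mathfrak C}([0,x])\big)^{\log_s p}}:\ x\in \mathfrak C\cap\left[\tfrac{h(1)}{p},1\right]\right\} \] is exactly the set of accumulation points of the sequence $(b_n)_{n\ge 1}$.
   Context: Fix integers $p\ge 3$ and $2\le s<p$, and a set $A\subset\{0,1,\dots,p-1\}$ with $\#A=s$. Let $h:\{0,1,\dots,s-1\}\to A$ be the unique strictly increasing bijection. For a positive integer $n$ with base-$s$ expansion $n=\sum_{i=0}^k\varepsilon_i s^i$ ($\varepsilon_i\in\{0,\dots,s-1\}$, $\varepsilon_k\ne 0$), put $a_n=\sum_{i=0}^k h(\varepsilon_i)p^i$ (the integer whose base-$p$ digits are $h(\varepsilon_k),\dots,h(\varepsilon_0)$). Let $b_n=a_n/n^{\log_s p}$ for $n\ge1$. Let $\mathfrak C=\{x\in[0,1]:$ all digits in the base-$p$ expansion of $x$ belong to $A\}$, the attractor of the maps $S_i(x)=(x+h(i))/p$, $0\le i\le s-1$, and let $\mu_{\mathfrak C}$ be the unique Borel probability measure with $\mu_{\mathfrak C}=\sum_{i=0}^{s-1}\frac1s\,\mu_{\mathfrak C}\circ S_i^{-1}$. An accumulation point of $(b_n)$ is a real number that is the limit of $b_{n_k}$ for some strictly increasing sequence of indices $(n_k)$. *)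

theory Defs
  imports "HOL-Probability.Probability"
begin

definition hmap :: "nat set \<Rightarrow> nat \<Rightarrow> nat" where
  "hmap A i = sorted_list_of_set A ! i"

text \<open>a_n: replace the base-s digits of n by their images under h and read in base p.\<close>
function aseq :: "nat \<Rightarrow> nat \<Rightarrow> nat set \<Rightarrow> nat \<Rightarrow> nat" where
  "aseq p s A n = (if n = 0 \<or> s < 2 then 0
                   else hmap A (n mod s) + p * aseq p s A (n div s))"
  by auto
termination
  by (relation "Wellfounded.measure (\<lambda>(p, s, A, n). n)") auto

definition bseq :: "nat \<Rightarrow> nat \<Rightarrow> nat set \<Rightarrow> nat \<Rightarrow> real" where
  "bseq p s A n = real (aseq p s A n) / (real n) powr (log (real s) (real p))"

text \<open>The Cantor-type set: points of [0,1] having a base-p expansion with all digits in A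
  (equivalently, the attractor of the maps S_i).\<close>
definition cantor_set :: "nat \<Rightarrow> nat set \<Rightarrow> real set" where
  "cantor_set p A = {x. \<exists>d::nat \<Rightarrow> nat. (\<forall>i. d i \<in> A) \<and>
                          x = (\<Sum>i. real (d i) / real p ^ (Suc i))}"

definition simil :: "nat \<Rightarrow> nat set \<Rightarrow> nat \<Rightarrow> real \<Rightarrow> real" where
  "simil p A i x = (x + real (hmap A i)) / real p"

definition self_similar_measure :: "nat \<Rightarrow> nat \<Rightarrow> nat set \<Rightarrow> real measure \<Rightarrow> bool" where
  "self_similar_measure p s A \<mu> \<longleftrightarrow>
     prob_space \<mu> \<and> sets \<mu> = sets borel \<and>
     (\<forall>B \<in> sets borel. measure \<mu> B = (\<Sum>i<s. measure \<mu> (simil p A i -` B)) / real s)"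

definition accumulation_points :: "(nat \<Rightarrow> real) \<Rightarrow> real set" where
  "accumulation_points b = {L. \<exists>r. strict_mono r \<and> (\<forall>k. 1 \<le> r k) \<and> (\<lambda>k. b (r k)) \<longlonglongrightarrow> L}"

end

theory Submission
  imports Defs "HOL-Library.Diagonal_Subsequence"
begin

declare aseq.simps[simp del]

lemma sorted_list_facts:
  assumes "finite A"
  shows "sorted_wrt (<) (sorted_list_of_set A)" "length (sorted_list_of_set A) = card A"
    "set (sorted_list_of_set A) = A"
  using assms by auto

definition xs :: "nat \<Rightarrow> nat set \<Rightarrow> (nat \<Rightarrow> nat) \<Rightarrow> real" where
  "xs p A e = (\<Sum>i. real (hmap A (e i)) / real p ^ Suc i)"
definition ts :: "nat \<Rightarrow> (nat \<Rightarrow> nat) \<Rightarrow> real" where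
  "ts s e = (\<Sum>i. real (e i) / real s ^ Suc i)"
primrec Nk :: "nat \<Rightarrow> (nat \<Rightarrow> nat) \<Rightarrow> nat \<Rightarrow> nat" where
  "Nk s e 0 = e 0"
| "Nk s e (Suc k) = s * Nk s e k + e (Suc k)"
primrec Ak :: "nat \<Rightarrow> nat set \<Rightarrow> (nat \<Rightarrow> nat) \<Rightarrow> nat \<Rightarrow> nat" where
  "Ak p A e 0 = hmap A (e 0)"
| "Ak p A e (Suc k) = p * Ak p A e k + hmap A (e (Suc k))"

lemma geo_sum: fixes q :: real assumes "q > 1"
  shows "(\<lambda>i. c / q ^ Suc i) sums (c / (q - 1))"
proof -
  have "(\<lambda>i. (1/q) ^ i) sums (1 / (1 - 1/q))" using assms by (intro geometric_sums) auto
  then have X: "(\<lambda>i. (c/q) * (1/q) ^ i) sums ((c/q) * (1 / (1 - 1/q)))" by (rule sums_mult)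
  have eq2: "(c/q) * (1 / (1 - 1/q)) = c / (q - 1)" using assms by (simp add: field_simps)
  have eq1: "(\<lambda>i. (c/q) * (1/q) ^ i) = (\<lambda>i. c / q ^ Suc i)" by (simp add: power_divide)
  show ?thesis using X unfolding eq1 eq2 .
qed

lemma geo_bounds: fixes q c :: real and g :: "nat \<Rightarrow> real"
  assumes q: "q > 1" and g0: "\<And>i. 0 \<le> g i" and gc: "\<And>i. g i \<le> c"
  shows "summable (\<lambda>i. g i / q ^ Suc i)" "(\<Sum>i. g i / q ^ Suc i) \<le> c / (q - 1)"
    "0 \<le> (\<Sum>i. g i / q ^ Suc i)"
proof -
  have le: "g i / q ^ Suc i \<le> c / q ^ Suc i" for i using q gc[of i] by (intro divide_right_mono) auto
  have nn: "0 \<le> g i / q ^ Suc i" for i using q g0[of i] by auto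
  have sc: "summable (\<lambda>i. c / q ^ Suc i)" using geo_sum[OF q] by (rule sums_summable)
  have nb: "norm (g i / q ^ Suc i) \<le> c / q ^ Suc i" for i using le[of i] nn[of i] by simp
  show sg: "summable (\<lambda>i. g i / q ^ Suc i)"
    by (rule summable_comparison_test'[OF sc nb])
  show "(\<Sum>i. g i / q ^ Suc i) \<le> c / (q - 1)"
    using suminf_le[OF le sg sc] geo_sum[OF q, of c] sums_unique by metis
  show "0 \<le> (\<Sum>i. g i / q ^ Suc i)" using suminf_nonneg[OF sg nn] .
qed

lemma trunc_gen: fixes q :: real and g :: "nat \<Rightarrow> real"
  assumes q: "q > 1" and g0: "\<And>i. 0 \<le> g i" and gc: "\<And>i. g i \<le> q - 1"
  shows "0 \<le> (\<Sum>i. g i / q ^ Suc i) - (\<Sum>i<m. g i / q ^ Suc i)"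
    "(\<Sum>i. g i / q ^ Suc i) - (\<Sum>i<m. g i / q ^ Suc i) \<le> 1 / q ^ m"
proof -
  have sg: "summable (\<lambda>i. g i / q ^ Suc i)" by (rule geo_bounds(1)[OF q, of g "q - 1"]) (simp_all add: g0 gc)
  have split: "(\<Sum>i. g i / q ^ Suc i) - (\<Sum>i<m. g i / q ^ Suc i) = (\<Sum>n. g (n + m) / q ^ Suc (n + m))"
    using suminf_split_initial_segment[OF sg, of m] by simp
  have eq: "(\<lambda>n. g (n + m) / q ^ Suc (n + m)) = (\<lambda>n. (g (n + m) / q ^ Suc n) / q ^ m)"
    by (simp add: power_add field_simps)
  have b: "summable (\<lambda>n. g (n + m) / q ^ Suc n)" "(\<Sum>n. g (n + m) / q ^ Suc n) \<le> (q - 1) / (q - 1)"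
      "0 \<le> (\<Sum>n. g (n + m) / q ^ Suc n)"
    using geo_bounds[OF q, of "\<lambda>n. g (n + m)" "q - 1"] g0 gc by auto
  have "(\<Sum>n. g (n + m) / q ^ Suc (n + m)) = (\<Sum>n. g (n + m) / q ^ Suc n) / q ^ m"
    unfolding eq by (rule suminf_divide[OF b(1)])
  moreover have "(\<Sum>n. g (n + m) / q ^ Suc n) \<le> 1" using b(2) q by simp
  ultimately show "0 \<le> (\<Sum>i. g i / q ^ Suc i) - (\<Sum>i<m. g i / q ^ Suc i)"
    "(\<Sum>i. g i / q ^ Suc i) - (\<Sum>i<m. g i / q ^ Suc i) \<le> 1 / q ^ m"
    using split b(3) q by (auto intro!: divide_right_mono)
qed

lemma shift_gen: fixes q :: real and g :: "nat \<Rightarrow> real"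
  assumes q: "q > 1" and g0: "\<And>i. 0 \<le> g i" and gc: "\<And>i. g i \<le> c"
  shows "(\<Sum>i. g i / q ^ Suc i) = (g 0 + (\<Sum>i. g (Suc i) / q ^ Suc i)) / q"
proof -
  have sg: "summable (\<lambda>i. g i / q ^ Suc i)" by (rule geo_bounds(1)[OF q, of g c]) (simp_all add: g0 gc)
  have sg': "summable (\<lambda>i. g (Suc i) / q ^ Suc i)"
    by (rule geo_bounds(1)[OF q, of "\<lambda>i. g (Suc i)" c]) (simp_all add: g0 gc)
  have "(\<Sum>i. g (Suc i) / q ^ Suc (Suc i)) = (\<Sum>i. g i / q ^ Suc i) - g 0 / q"
    using suminf_split_head[OF sg] by simp
  moreover have "(\<Sum>i. g (Suc i) / q ^ Suc (Suc i)) = (\<Sum>i. g (Suc i) / q ^ Suc i) / q"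
    using suminf_divide[OF sg', of q] by (simp add: field_simps)
  ultimately show ?thesis using q by (simp add: field_simps)
qed

lemma approx_lim: fixes a c d :: "nat \<Rightarrow> real"
  assumes c: "c \<longlonglongrightarrow> 0" and d: "d \<longlonglongrightarrow> 0"
    and ev: "\<And>m. eventually (\<lambda>j. \<bar>a j - L\<bar> \<le> c j + d m) sequentially"
  shows "a \<longlonglongrightarrow> L"
proof (rule tendstoI)
  fix \<epsilon> :: real assume \<epsilon>: "\<epsilon> > 0"
  then have "\<epsilon> / 2 > 0" by simp
  have "eventually (\<lambda>m. dist (d m) 0 < \<epsilon>/2) sequentially" by (rule tendstoD[OF d \<open>\<epsilon>/2 > 0\<close>])
  then obtain m where m: "dist (d m) 0 < \<epsilon>/2" by (auto simp: eventually_sequentially)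
  have "eventually (\<lambda>j. dist (c j) 0 < \<epsilon>/2) sequentially" by (rule tendstoD[OF c \<open>\<epsilon>/2 > 0\<close>])
  with ev[of m] show "eventually (\<lambda>j. dist (a j) L < \<epsilon>) sequentially"
  proof eventually_elim
    case (elim j)
    then show ?case using m by (auto simp: dist_real_def abs_less_iff abs_le_iff)
  qed
qed

lemma inv_pow_Suc: fixes q :: real assumes "q > 1" shows "(\<lambda>j. 1 / q ^ Suc j) \<longlonglongrightarrow> 0"
  using LIMSEQ_Suc[OF LIMSEQ_divide_realpow_zero[OF assms, of 1]] .

locale setting =
  fixes p s :: nat and A :: "nat set" and \<mu> :: "real measure"
  assumes p3: "p \<ge> 3" and s2: "2 \<le> s" and sp: "s < p" and Asub: "A \<subseteq> {0..<p}"
    and cardA: "card A = s" and ssm: "self_similar_measure p s A \<mu>"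
begin

abbreviation h where "h \<equiv> hmap A"

lemma finA: "finite A" using cardA s2 card_ge_0_finite by force

lemma len: "length (sorted_list_of_set A) = s" using finA cardA by simp

lemma h_mono: "i < j \<Longrightarrow> j < s \<Longrightarrow> h i < h j"
  unfolding hmap_def using sorted_wrt_nth_less[OF sorted_list_facts(1)[OF finA]] len by auto

lemma h_mono_le: "i \<le> j \<Longrightarrow> j < s \<Longrightarrow> h i \<le> h j"
  using h_mono by (cases "i = j") (auto simp: order_le_less)

lemma h_in: "i < s \<Longrightarrow> h i \<in> A"
  unfolding hmap_def using len finA by (metis nth_mem set_sorted_list_of_set)

lemma h_lt: assumes "i < s" shows "h i < p"
proof -
  have "h i \<in> A" using h_in assms by blast
  then show ?thesis using Asub by auto
qed

lemma h_surj: "d \<in> A \<Longrightarrow> \<exists>i<s. h i = d"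
  unfolding hmap_def using len finA by (metis in_set_conv_nth set_sorted_list_of_set)

definition \<theta> where "\<theta> = log (real s) (real p)"

lemma s_powr: "real s powr \<theta> = real p" unfolding \<theta>_def using s2 p3 by simp

lemma spow_powr: "(real s ^ k) powr \<theta> = real p ^ k"
proof -
  have "(real s ^ k) powr \<theta> = (real s powr real k) powr \<theta>" using s2 by (simp add: powr_realpow)
  also have "\<dots> = (real s powr \<theta>) powr real k" by (simp add: powr_powr mult.commute)
  also have "\<dots> = real p ^ k" using s_powr p3 by (simp add: powr_realpow)
  finally show ?thesis .
qed

sublocale rd: real_distribution \<mu>
  using ssm unfolding self_similar_measure_def real_distribution_def real_distribution_axioms_def by auto

definition G where "G y = measure \<mu> {..y}"

lemma G_cdf: "G = cdf \<mu>" unfolding G_def cdf_def by auto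

lemma G_mono: "x \<le> y \<Longrightarrow> G x \<le> G y"
  unfolding G_def by (intro rd.finite_measure_mono) auto

lemma G_nonneg: "0 \<le> G x" unfolding G_def by simp
lemma G_le1: "G x \<le> 1" unfolding G_def by simp

lemma pre_atMost: "simil p A i -` {..y} = {..real p * y - real (h i)}"
  using p3 by (auto simp: simil_def field_simps)

lemma G_eq: "G y = (\<Sum>i<s. G (real p * y - real (h i))) / real s"
proof -
  have "{..y} \<in> sets borel" by simp
  then have "measure \<mu> {..y} = (\<Sum>i<s. measure \<mu> (simil p A i -` {..y})) / real s"
    using ssm unfolding self_similar_measure_def by blast
  then show ?thesis unfolding G_def pre_atMost .
qed

lemma G_sum_le: "(\<Sum>i<s. G (real p * y - real (h i))) \<le> real s * G (real p * y)"
proof -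
  have "(\<Sum>i<s. G (real p * y - real (h i))) \<le> (\<Sum>i<s. G (real p * y))"
    by (intro sum_mono G_mono) auto
  then show ?thesis by simp
qed

lemma G_le_py: "G y \<le> G (real p * y)"
proof -
  have "G y * real s \<le> real s * G (real p * y)" using G_eq[of y] G_sum_le[of y] s2 by simp
  then show ?thesis using s2 by (simp add: mult.commute)
qed

lemma G_le_iter: "G y \<le> G (real p ^ k * y)"
proof (induction k)
  case 0 then show ?case by simp
next
  case (Suc k)
  have "G (real p ^ k * y) \<le> G (real p * (real p ^ k * y))" by (rule G_le_py)
  then show ?case using Suc by (simp add: mult.assoc)
qed

lemma G_neg: assumes "y < 0" shows "G y = 0"
proof -
  have "G y \<le> 0 + e" if "e > 0" for e
  proof -
    have "((cdf \<mu>) \<longlongrightarrow> 0) at_bot" by (rule rd.cdf_lim_at_bot)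
    then have "eventually (\<lambda>z. cdf \<mu> z < e) at_bot" using that
      by (rule order_tendstoD(2))
    then obtain Z where Z: "\<And>z. z \<le> Z \<Longrightarrow> cdf \<mu> z < e" by (auto simp: eventually_at_bot_linorder)
    obtain n where n: "Z / y < real p ^ n" using real_arch_pow[of "real p" "Z / y"] p3 by auto
    have "Z / y * y \<ge> real p ^ n * y" using n assms by (intro mult_right_mono_neg) auto
    then have "real p ^ n * y \<le> Z" using assms by simp
    then have "G (real p ^ n * y) < e" using Z unfolding G_cdf by blast
    then show ?thesis using G_le_iter[of y n] by linarith
  qed
  then have "G y \<le> 0" by (rule field_le_epsilon) 
  then show ?thesis using G_nonneg[of y] by linarith
qed

lemma G_ge_right: fixes z :: real shows "G (1 + real p * z) \<le> G (1 + z)"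
proof -
  have "(\<Sum>i<s. G (real p * (1 + z) - real (h i))) \<ge> (\<Sum>i<s. G (1 + real p * z))"
  proof (intro sum_mono G_mono)
    fix i assume "i \<in> {..<s}"
    then have "h i < p" using h_lt by auto
    then have "real (h i) \<le> real p - 1" by linarith
    then show "1 + real p * z \<le> real p * (1 + z) - real (h i)" by (simp add: algebra_simps)
  qed
  then have "real s * G (1 + real p * z) \<le> G (1 + z) * real s" using G_eq[of "1+z"] s2 by simp
  then show ?thesis using s2 by (simp add: mult.commute)
qed

lemma G_ge_iter: fixes z :: real shows "G (1 + real p ^ k * z) \<le> G (1 + z)"
proof (induction k)
  case 0 then show ?case by simp
next
  case (Suc k)
  have "G (1 + real p * (real p ^ k * z)) \<le> G (1 + real p ^ k * z)" by (rule G_ge_right)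
  moreover have "real p ^ Suc k * z = real p * (real p ^ k * z)" by (simp add: mult.assoc)
  ultimately show ?case using Suc by (metis order_trans)
qed

lemma G_gt1: assumes "y > 1" shows "G y = 1"
proof -
  have "1 \<le> G y + e" if "e > 0" for e
  proof -
    have "((cdf \<mu>) \<longlongrightarrow> 1) at_top" by (rule rd.cdf_lim_at_top_prob)
    moreover have "1 - e < 1" using that by simp
    ultimately have "eventually (\<lambda>z. cdf \<mu> z > 1 - e) at_top"
      by (rule order_tendstoD(1))
    then obtain Z where Z: "\<And>z. z \<ge> Z \<Longrightarrow> cdf \<mu> z > 1 - e" by (auto simp: eventually_at_top_linorder)
    obtain n where n: "(Z - 1) / (y - 1) < real p ^ n" using real_arch_pow[of "real p" "(Z - 1) / (y - 1)"] p3 by auto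
    have "(Z - 1) / (y - 1) * (y - 1) \<le> real p ^ n * (y - 1)" using n assms by (intro mult_right_mono) auto
    then have "Z \<le> 1 + real p ^ n * (y - 1)" using assms by simp
    then have "G (1 + real p ^ n * (y - 1)) > 1 - e" using Z unfolding G_cdf by blast
    moreover have "G (1 + real p ^ n * (y - 1)) \<le> G (1 + (y - 1))" by (rule G_ge_iter)
    ultimately show ?thesis by simp
  qed
  then have "1 \<le> G y" by (rule field_le_epsilon)
  then show ?thesis using G_le1[of y] by linarith
qed

lemma h0_small: "h 0 + 2 \<le> p"
proof -
  have "h 0 < h (s - 1)" using h_mono[of 0 "s - 1"] s2 by auto
  moreover have "h (s - 1) < p" using h_lt s2 by auto
  ultimately show ?thesis by linarith
qed

lemma G_one: assumes "y \<ge> 1" shows "G y = 1"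
proof (cases "y > 1")
  case True then show ?thesis using G_gt1 by blast
next
  case False
  then have y: "y = 1" using assms by linarith
  have "(\<Sum>i<s. G (real p * 1 - real (h i))) \<ge> (\<Sum>i<s. G 1 + (if i = 0 then 1 - G 1 else 0))"
  proof (intro sum_mono)
    fix i assume i: "i \<in> {..<s}"
    show "G 1 + (if i = 0 then 1 - G 1 else 0) \<le> G (real p * 1 - real (h i))"
    proof (cases "i = 0")
      case True
      have "real p * 1 - real (h i) > 1" using h0_small True by simp
      then show ?thesis using True G_gt1 by simp
    next
      case False
      have "h i < p" using h_lt i by auto
      then have "real p * 1 - real (h i) \<ge> 1" by simp
      then show ?thesis using False G_mono by simp
    qed
  qed
  also have "(\<Sum>i<s. G 1 + (if i = 0 then 1 - G 1 else 0)) = real s * G 1 + (1 - G 1)"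
    using s2 by (simp add: sum.distrib)
  moreover have "(\<Sum>i<s. G (real p * 1 - real (h i))) = G 1 * real s"
    using s2 by (subst G_eq[of 1]) simp
  ultimately have "real s * G 1 + (1 - G 1) \<le> G 1 * real s" by linarith
  then have "1 \<le> G 1" by (simp add: algebra_simps)
  then show ?thesis using G_le1[of 1] y by simp
qed

lemma G_zero: "G 0 = 0"
proof -
  have "(\<Sum>i<s. G (real p * 0 - real (h i))) \<le> (\<Sum>i<s. if i = 0 then G 0 else 0)"
  proof (intro sum_mono)
    fix i assume i: "i \<in> {..<s}"
    show "G (real p * 0 - real (h i)) \<le> (if i = 0 then G 0 else 0)"
    proof (cases "i = 0")
      case True then show ?thesis using G_mono by simp
    next
      case False
      have "h 0 < h i" using h_mono[of 0 i] i False by auto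
      then have "real p * 0 - real (h i) < 0" by simp
      then show ?thesis using False G_neg by simp
    qed
  qed
  also have "\<dots> = G 0" using s2 by simp
  finally have X: "(\<Sum>i<s. G (real p * 0 - real (h i))) \<le> G 0" .
  have "(\<Sum>i<s. G (real p * 0 - real (h i))) = G 0 * real s"
    using s2 by (subst G_eq[of 0]) simp
  with X have "G 0 * real s \<le> G 0" by linarith
  moreover have "G 0 * 2 \<le> G 0 * real s" using s2 G_nonneg[of 0] by (intro mult_left_mono) auto
  ultimately have "G 0 \<le> 0" by linarith
  then show ?thesis using G_nonneg[of 0] by linarith
qed

lemma meas_Icc: assumes "x \<ge> 0" shows "measure \<mu> {0..x} = G x"
proof -
  have s1: "{0..x} \<subseteq> {..x}" by (simp add: subset_eq)
  have m1: "measure \<mu> {0..x} \<le> G x" unfolding G_def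
    by (rule rd.finite_measure_mono[OF s1]) simp
  have s2: "{..<0} \<subseteq> {..(0::real)}" by (simp add: subset_eq)
  have m2: "measure \<mu> {..<0} \<le> G 0" unfolding G_def
    by (rule rd.finite_measure_mono[OF s2]) simp
  have e: "{..x} = {..<0} \<union> {0..x}" using assms by (auto simp: subset_eq)
  have m3: "measure \<mu> ({..<0} \<union> {0..x}) \<le> measure \<mu> {..<0} + measure \<mu> {0..x}"
    by (rule measure_Un_le) simp_all
  have m4: "G x \<le> measure \<mu> {..<0} + measure \<mu> {0..x}" unfolding G_def e by (rule m3)
  have m5: "0 \<le> measure \<mu> {..<0}" by (rule measure_nonneg)
  show ?thesis using m1 m2 m4 m5 G_zero by linarith
qed

definition valid :: "(nat \<Rightarrow> nat) \<Rightarrow> bool" where "valid e \<longleftrightarrow> (\<forall>i. e i < s)"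

lemma valid_shift: "valid e \<Longrightarrow> valid (\<lambda>i. e (Suc i))" unfolding valid_def by auto

lemma hval_bounds: assumes "valid e" shows "0 \<le> real (h (e i))" "real (h (e i)) \<le> real p - 1"
proof -
  have "h (e i) < p" using assms h_lt unfolding valid_def by blast
  then show "real (h (e i)) \<le> real p - 1" by linarith
qed simp

lemma eval_bounds: assumes "valid e" shows "0 \<le> real (e i)" "real (e i) \<le> real s - 1"
proof -
  have "e i < s" using assms unfolding valid_def by blast
  then show "real (e i) \<le> real s - 1" by linarith
qed simp

lemma p1: "real p > 1" using p3 by simp
lemma s1: "real s > 1" using s2 by simp

lemma xs_bounds: assumes "valid e" shows "0 \<le> xs p A e" "xs p A e \<le> 1"
proof -
  note gb = geo_bounds[OF p1, of "\<lambda>i. real (h (e i))" "real p - 1"]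
  have "0 \<le> real (h (e i))" "real (h (e i)) \<le> real p - 1" for i using hval_bounds[OF assms] by auto
  note gb' = gb[OF this]
  show "0 \<le> xs p A e" unfolding xs_def using gb'(3) .
  show "xs p A e \<le> 1" unfolding xs_def using gb'(2) p1 by simp
qed

lemma ts_bounds: assumes "valid e" shows "0 \<le> ts s e" "ts s e \<le> 1"
proof -
  note gb = geo_bounds[OF s1, of "\<lambda>i. real (e i)" "real s - 1"]
  have "0 \<le> real (e i)" "real (e i) \<le> real s - 1" for i using eval_bounds[OF assms] by auto
  note gb' = gb[OF this]
  show "0 \<le> ts s e" unfolding ts_def using gb'(3) .
  show "ts s e \<le> 1" unfolding ts_def using gb'(2) s1 by simp
qed

lemma xs_shift: assumes "valid e" shows "xs p A e = (real (h (e 0)) + xs p A (\<lambda>i. e (Suc i))) / real p"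
proof -
  have "0 \<le> real (h (e i))" "real (h (e i)) \<le> real p - 1" for i using hval_bounds[OF assms] by auto
  note X = shift_gen[OF p1, of "\<lambda>i. real (h (e i))" "real p - 1", OF this]
  show ?thesis unfolding xs_def using X .
qed

lemma ts_shift: assumes "valid e" shows "ts s e = (real (e 0) + ts s (\<lambda>i. e (Suc i))) / real s"
proof -
  have "0 \<le> real (e i)" "real (e i) \<le> real s - 1" for i using eval_bounds[OF assms] by auto
  note X = shift_gen[OF s1, of "\<lambda>i. real (e i)" "real s - 1", OF this]
  show ?thesis unfolding ts_def using X .
qed

lemma Ak_sum: "real (Ak p A e k) / real p ^ Suc k = (\<Sum>i<Suc k. real (h (e i)) / real p ^ Suc i)"
proof (induction k)
  case 0 then show ?case by simp
next
  case (Suc k)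
  have "real (Ak p A e (Suc k)) / real p ^ Suc (Suc k)
      = real (Ak p A e k) / real p ^ Suc k + real (h (e (Suc k))) / real p ^ Suc (Suc k)"
    using p3 by (simp add: field_simps)
  then show ?case using Suc by simp
qed

lemma Nk_sum: "real (Nk s e k) / real s ^ Suc k = (\<Sum>i<Suc k. real (e i) / real s ^ Suc i)"
proof (induction k)
  case 0 then show ?case by simp
next
  case (Suc k)
  have "real (Nk s e (Suc k)) / real s ^ Suc (Suc k)
      = real (Nk s e k) / real s ^ Suc k + real (e (Suc k)) / real s ^ Suc (Suc k)"
    using s2 by (simp add: field_simps)
  then show ?case using Suc by simp
qed

lemma trunc_x: assumes "valid e"
  shows "0 \<le> xs p A e - real (Ak p A e k) / real p ^ Suc k"
    "xs p A e - real (Ak p A e k) / real p ^ Suc k \<le> 1 / real p ^ Suc k"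
proof -
  have "0 \<le> real (h (e i))" "real (h (e i)) \<le> real p - 1" for i using hval_bounds[OF assms] by auto
  note X = trunc_gen[OF p1, of "\<lambda>i. real (h (e i))", OF this, of "Suc k"]
  show "0 \<le> xs p A e - real (Ak p A e k) / real p ^ Suc k"
    "xs p A e - real (Ak p A e k) / real p ^ Suc k \<le> 1 / real p ^ Suc k"
    unfolding xs_def Ak_sum using X by auto
qed

lemma trunc_t: assumes "valid e"
  shows "0 \<le> ts s e - real (Nk s e k) / real s ^ Suc k"
    "ts s e - real (Nk s e k) / real s ^ Suc k \<le> 1 / real s ^ Suc k"
proof -
  have "0 \<le> real (e i)" "real (e i) \<le> real s - 1" for i using eval_bounds[OF assms] by auto
  note X = trunc_gen[OF s1, of "\<lambda>i. real (e i)", OF this, of "Suc k"]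
  show "0 \<le> ts s e - real (Nk s e k) / real s ^ Suc k"
    "ts s e - real (Nk s e k) / real s ^ Suc k \<le> 1 / real s ^ Suc k"
    unfolding ts_def Nk_sum using X by auto
qed

lemma ts_ge: assumes "valid e" shows "real (e 0) / real s \<le> ts s e"
  using trunc_t(1)[OF assms, of 0] by simp

lemma xs_ge: assumes "valid e" shows "real (h (e 0)) / real p \<le> xs p A e"
  using trunc_x(1)[OF assms, of 0] by simp

lemma G_step: assumes "valid e"
  shows "G (xs p A e) = (real (e 0) + G (xs p A (\<lambda>i. e (Suc i)))) / real s"
proof -
  define e' where "e' = (\<lambda>i. e (Suc i))"
  have v': "valid e'" using valid_shift[OF assms] unfolding e'_def .
  have e0: "e 0 < s" using assms unfolding valid_def by blast
  have x: "real p * xs p A e = real (h (e 0)) + xs p A e'"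
    using xs_shift[OF assms] p3 unfolding e'_def by simp
  have "(\<Sum>i<s. G (real p * xs p A e - real (h i)))
      = (\<Sum>i<s. (if i < e 0 then 1 else 0) + (if i = e 0 then G (xs p A e') else 0))"
  proof (intro sum.cong refl)
    fix i assume i: "i \<in> {..<s}"
    show "G (real p * xs p A e - real (h i)) = (if i < e 0 then 1 else 0) + (if i = e 0 then G (xs p A e') else 0)"
    proof (cases "i < e 0")
      case True
      then have "h i < h (e 0)" using h_mono e0 by blast
      then have "real p * xs p A e - real (h i) \<ge> 1" using x xs_bounds[OF v'] by linarith
      then show ?thesis using True G_one by simp
    next
      case False
      show ?thesis
      proof (cases "i = e 0")
        case True then show ?thesis using x by simp
      next
        case F2: False
        then have "h (e 0) < h i" using h_mono i False by auto
        then have "real p * xs p A e - real (h i) \<le> 0" using x xs_bounds[OF v'] by linarith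
        then have "G (real p * xs p A e - real (h i)) \<le> 0" using G_mono[of _ 0] G_zero by fastforce
        then show ?thesis using False F2 G_nonneg by (simp add: antisym)
      qed
    qed
  qed
  also have "\<dots> = real (e 0) + G (xs p A e')"
  proof -
    have "(\<Sum>i<s. (if i < e 0 then 1 else 0 :: real)) = (\<Sum>i<e 0. 1)"
      using e0 by (intro sum.mono_neutral_cong_right) auto
    then show ?thesis using e0 by (simp add: sum.distrib)
  qed
  finally show ?thesis using G_eq[of "xs p A e"] unfolding e'_def by simp
qed

lemma G_xs: assumes "valid e" shows "G (xs p A e) = ts s e"
proof -
  have "\<forall>e. valid e \<longrightarrow> \<bar>G (xs p A e) - ts s e\<bar> \<le> 1 / real s ^ k" for k
  proof (induction k)
    case 0
    show ?case
    proof (intro allI impI)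
      fix e :: "nat \<Rightarrow> nat" assume v: "valid e"
      have "0 \<le> G (xs p A e)" "G (xs p A e) \<le> 1" "0 \<le> ts s e" "ts s e \<le> 1"
        using G_nonneg G_le1 ts_bounds[OF v] by auto
      then show "\<bar>G (xs p A e) - ts s e\<bar> \<le> 1 / real s ^ 0" by (simp add: abs_le_iff)
    qed
  next
    case (Suc k)
    show ?case
    proof (intro allI impI)
      fix e :: "nat \<Rightarrow> nat" assume v: "valid e"
      have "G (xs p A e) - ts s e = (G (xs p A (\<lambda>i. e (Suc i))) - ts s (\<lambda>i. e (Suc i))) / real s"
        using G_step[OF v] ts_shift[OF v] s2 by (simp add: field_simps)
      then have "\<bar>G (xs p A e) - ts s e\<bar> = \<bar>G (xs p A (\<lambda>i. e (Suc i))) - ts s (\<lambda>i. e (Suc i))\<bar> / real s"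
        by simp
      also have "\<dots> \<le> (1 / real s ^ k) / real s"
        using Suc valid_shift[OF v] s2 by (intro divide_right_mono) auto
      finally show "\<bar>G (xs p A e) - ts s e\<bar> \<le> 1 / real s ^ Suc k" by (simp add: field_simps)
    qed
  qed
  then have "\<bar>G (xs p A e) - ts s e\<bar> \<le> 1 / real s ^ k" for k using assms by blast
  moreover have "(\<lambda>k. 1 / real s ^ k) \<longlonglongrightarrow> 0"
    by (rule LIMSEQ_divide_realpow_zero[OF s1])
  ultimately have "\<bar>G (xs p A e) - ts s e\<bar> \<le> 0"
    by (intro LIMSEQ_le_const[where X="\<lambda>k. 1 / real s ^ k"]) auto
  then show ?thesis by simp
qed

lemma aseq_unf: "n \<noteq> 0 \<Longrightarrow> aseq p s A n = h (n mod s) + p * aseq p s A (n div s)"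
  using s2 by (subst aseq.simps) simp

lemma aseq_0: "aseq p s A 0 = 0" by (subst aseq.simps) simp

lemma Nk_ge: assumes "e 0 \<ge> 1" shows "s ^ k \<le> Nk s e k"
proof (induction k)
  case 0 then show ?case using assms by simp
next
  case (Suc k)
  have "s ^ Suc k = s * s ^ k" by simp
  also have "\<dots> \<le> s * Nk s e k" using Suc by simp
  also have "\<dots> \<le> Nk s e (Suc k)" by simp
  finally show ?case .
qed

lemma Nk_lt: assumes "valid e" shows "Nk s e k < s ^ Suc k"
proof (induction k)
  case 0 then show ?case using assms unfolding valid_def by simp
next
  case (Suc k)
  have "e (Suc k) < s" using assms unfolding valid_def by blast
  then have "Nk s e (Suc k) < s * Nk s e k + s" by simp
  also have "\<dots> = s * (Nk s e k + 1)" by (simp add: algebra_simps)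
  also have "\<dots> \<le> s * s ^ Suc k" using Suc by (intro mult_left_mono) auto
  finally show ?case by simp
qed

lemma aseq_Nk: assumes "valid e" "e 0 \<ge> 1" shows "aseq p s A (Nk s e k) = Ak p A e k"
proof (induction k)
  case 0
  have "e 0 < s" using assms unfolding valid_def by blast
  moreover have "aseq p s A (e 0) = h (e 0 mod s) + p * aseq p s A (e 0 div s)"
    using assms(2) by (intro aseq_unf) simp
  ultimately show ?case by (simp add: aseq_0)
next
  case (Suc k)
  have ek: "e (Suc k) < s" using assms unfolding valid_def by blast
  have "1 \<le> s ^ k" using s2 by simp
  then have pos: "Nk s e k \<ge> 1" using Nk_ge[where e=e and k=k, OF assms(2)] by linarith
  have nz: "Nk s e (Suc k) \<noteq> 0" using pos s2 by simp
  have m: "Nk s e (Suc k) mod s = e (Suc k)" using ek by simp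
  have d: "Nk s e (Suc k) div s = Nk s e k" using ek s2 by simp
  show ?case using aseq_unf[OF nz] m d Suc by simp
qed

lemma Nk_cong: "(\<And>i. i \<le> k \<Longrightarrow> e i = e' i) \<Longrightarrow> Nk s e k = Nk s e' k"
  by (induction k) auto

lemma represent: assumes "n \<ge> 1" shows "\<exists>e k. valid e \<and> e 0 \<ge> 1 \<and> Nk s e k = n"
  using assms
proof (induction n rule: less_induct)
  case (less n)
  show ?case
  proof (cases "n < s")
    case True
    define e where "e = (\<lambda>i::nat. if i = 0 then n else 0)"
    have "valid e" using True s2 unfolding valid_def e_def by auto
    moreover have "e 0 \<ge> 1" "Nk s e 0 = n" using less.prems unfolding e_def by auto
    ultimately show ?thesis by blast
  next
    case False
    define q where "q = n div s"
    have "s div s \<le> n div s" using False by (intro div_le_mono) simp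
    then have q1: "q \<ge> 1" using s2 unfolding q_def by simp
    have qn: "q < n" using less.prems s2 unfolding q_def by simp
    obtain e' k where e': "valid e'" "e' 0 \<ge> 1" "Nk s e' k = q" using less.IH[OF qn q1] by blast
    define e where "e = e'(Suc k := n mod s)"
    have "valid e" using e'(1) s2 unfolding valid_def e_def by auto
    moreover have "e 0 \<ge> 1" using e'(2) unfolding e_def by simp
    moreover have "Nk s e k = q" using e'(3) Nk_cong[of k e e'] unfolding e_def by simp
    then have "Nk s e (Suc k) = n" unfolding q_def e_def by simp
    ultimately show ?thesis by blast
  qed
qed

definition Xk where "Xk e k = real (Ak p A e k) / real p ^ Suc k"
definition Tk where "Tk e k = real (Nk s e k) / real s ^ Suc k"

lemma Tk_ge: assumes "e 0 \<ge> 1" shows "1 / real s \<le> Tk e k"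
proof -
  have "real (s ^ k) \<le> real (Nk s e k)" using Nk_ge[where e=e and k=k, OF assms] by (simp only: of_nat_le_iff)
  then have "real s ^ k \<le> real (Nk s e k)" by simp
  then show ?thesis unfolding Tk_def using s2 by (simp add: field_simps)
qed

lemma bseq_Nk: assumes "valid e" "e 0 \<ge> 1"
  shows "bseq p s A (Nk s e k) = Xk e k / Tk e k powr \<theta>"
proof -
  have "0 < 1 / real s" using s2 by simp
  then have Tpos: "Tk e k > 0" using Tk_ge[where e=e and k=k, OF assms(2)] by linarith
  have eq: "real (Nk s e k) = Tk e k * real s ^ Suc k" unfolding Tk_def using s2 by simp
  have "real (Nk s e k) powr \<theta> = (Tk e k * real s ^ Suc k) powr \<theta>" by (simp only: eq)
  also have "\<dots> = Tk e k powr \<theta> * (real s ^ Suc k) powr \<theta>" using Tpos by (simp add: powr_mult)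
  also have "\<dots> = Tk e k powr \<theta> * real p ^ Suc k" by (simp only: spow_powr)
  finally have "real (Nk s e k) powr \<theta> = Tk e k powr \<theta> * real p ^ Suc k" .
  then show ?thesis unfolding bseq_def \<theta>_def[symmetric] aseq_Nk[OF assms] Xk_def
    using Tpos p3 by (simp add: field_simps)
qed

lemma Xk_approx: assumes "valid e" shows "\<bar>xs p A e - Xk e k\<bar> \<le> 1 / real p ^ Suc k"
  using trunc_x[OF assms, of k] unfolding Xk_def by (simp add: abs_le_iff)

lemma Tk_approx: assumes "valid e" shows "\<bar>ts s e - Tk e k\<bar> \<le> 1 / real s ^ Suc k"
  using trunc_t[OF assms, of k] unfolding Tk_def by (simp add: abs_le_iff)

lemma xs_close: assumes "valid e" "valid e'" "\<And>i. i < m \<Longrightarrow> e i = e' i"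
  shows "\<bar>xs p A e - xs p A e'\<bar> \<le> 1 / real p ^ m"
proof -
  have b: "0 \<le> real (h (f i))" "real (h (f i)) \<le> real p - 1" if "valid f" for f i
    using hval_bounds[OF that] by auto
  note X = trunc_gen[OF p1, of "\<lambda>i. real (h (e i))", OF b[OF assms(1)], of m]
  note Y = trunc_gen[OF p1, of "\<lambda>i. real (h (e' i))", OF b[OF assms(2)], of m]
  have "(\<Sum>i<m. real (h (e i)) / real p ^ Suc i) = (\<Sum>i<m. real (h (e' i)) / real p ^ Suc i)"
    using assms(3) by (intro sum.cong) auto
  then show ?thesis using X Y unfolding xs_def by (simp add: abs_le_iff)
qed

lemma ts_close: assumes "valid e" "valid e'" "\<And>i. i < m \<Longrightarrow> e i = e' i"
  shows "\<bar>ts s e - ts s e'\<bar> \<le> 1 / real s ^ m"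
proof -
  have b: "0 \<le> real (f i)" "real (f i) \<le> real s - 1" if "valid f" for f i
    using eval_bounds[OF that] by auto
  note X = trunc_gen[OF s1, of "\<lambda>i. real (e i)", OF b[OF assms(1)], of m]
  note Y = trunc_gen[OF s1, of "\<lambda>i. real (e' i)", OF b[OF assms(2)], of m]
  have "(\<Sum>i<m. real (e i) / real s ^ Suc i) = (\<Sum>i<m. real (e' i) / real s ^ Suc i)"
    using assms(3) by (intro sum.cong) auto
  then show ?thesis using X Y unfolding ts_def by (simp add: abs_le_iff)
qed


lemma Nk_strict: assumes "valid e" "e 0 \<ge> 1" shows "strict_mono (Nk s e)"
proof (rule strict_monoI_Suc)
  fix k
  have "1 \<le> s ^ k" using s2 by simp
  then have pos: "Nk s e k \<ge> 1" using Nk_ge[where e=e and k=k, OF assms(2)] by linarith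
  have "Nk s e k < s * Nk s e k" using pos s2 by simp
  moreover have "Nk s e (Suc k) = s * Nk s e k + e (Suc k)" by simp
  ultimately show "Nk s e k < Nk s e (Suc k)" by linarith
qed

lemma caseA: assumes v: "valid e" and e0: "e 0 \<ge> 1"
  shows "xs p A e / (G (xs p A e)) powr \<theta> \<in> accumulation_points (bseq p s A)"
proof -
  have "1 / real s \<le> real (e 0) / real s" using e0 s2 by (intro divide_right_mono) auto
  moreover have "0 < 1 / real s" using s2 by simp
  ultimately have tpos: "ts s e > 0" using ts_ge[OF v] by linarith
  have X: "(\<lambda>j. Xk e j) \<longlonglongrightarrow> xs p A e"
  proof (rule approx_lim[where d="\<lambda>_. 0" and c="\<lambda>j. 1 / real p ^ Suc j"])
    show "(\<lambda>j. 1 / real p ^ Suc j) \<longlonglongrightarrow> 0" by (rule inv_pow_Suc[OF p1])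
    fix m show "eventually (\<lambda>j. \<bar>Xk e j - xs p A e\<bar> \<le> 1 / real p ^ Suc j + 0) sequentially"
      using Xk_approx[OF v] by (simp add: abs_minus_commute)
  qed simp
  have T: "(\<lambda>j. Tk e j) \<longlonglongrightarrow> ts s e"
  proof (rule approx_lim[where d="\<lambda>_. 0" and c="\<lambda>j. 1 / real s ^ Suc j"])
    show "(\<lambda>j. 1 / real s ^ Suc j) \<longlonglongrightarrow> 0" by (rule inv_pow_Suc[OF s1])
    fix m show "eventually (\<lambda>j. \<bar>Tk e j - ts s e\<bar> \<le> 1 / real s ^ Suc j + 0) sequentially"
      using Tk_approx[OF v] by (simp add: abs_minus_commute)
  qed simp
  have "(\<lambda>j. Tk e j powr \<theta>) \<longlonglongrightarrow> ts s e powr \<theta>"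
    using tendsto_powr[OF T tendsto_const] tpos by simp
  then have lim: "(\<lambda>j. Xk e j / Tk e j powr \<theta>) \<longlonglongrightarrow> xs p A e / ts s e powr \<theta>"
    using X tpos by (intro tendsto_divide) auto
  have b: "bseq p s A (Nk s e j) = Xk e j / Tk e j powr \<theta>" for j by (rule bseq_Nk[OF v e0])
  have "1 \<le> Nk s e j" for j
  proof -
    have "1 \<le> s ^ j" using s2 by simp
    then show ?thesis using Nk_ge[where e=e and k=j, OF e0] by linarith
  qed
  moreover have "(\<lambda>j. bseq p s A (Nk s e j)) \<longlonglongrightarrow> xs p A e / ts s e powr \<theta>"
    unfolding b by (rule lim)
  ultimately show ?thesis unfolding accumulation_points_def G_xs[OF v]
    using Nk_strict[OF v e0] by blast
qed


lemma const_subseq: fixes f :: "nat \<Rightarrow> nat" assumes fs: "\<And>j. f j < s"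
  shows "\<exists>r::nat\<Rightarrow>nat. strict_mono r \<and> (\<forall>j. f (r j) = f (r 0))"
proof -
  have sub: "f ` UNIV \<subseteq> {..<s}" using fs by (auto simp: image_subset_iff)
  have fin: "finite (f ` UNIV)" by (rule finite_subset[OF sub]) simp
  have inf: "\<not> finite (UNIV :: nat set)" by simp
  from pigeonhole_infinite[OF inf fin] obtain j0 where "\<not> finite {j \<in> UNIV. f j = f j0}"
    by (elim bexE)
  then have inf2: "infinite {j. f j = f j0}" by simp
  have ex: "\<exists>r::nat\<Rightarrow>nat. strict_mono r \<and> (\<forall>n. r n \<in> {j. f j = f j0})" by (rule infinite_enumerate[OF inf2])
  obtain r :: "nat \<Rightarrow> nat" where r0: "strict_mono r \<and> (\<forall>n. r n \<in> {j. f j = f j0})" by (rule exE[OF ex], rule that)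
  then have r: "strict_mono r" "\<forall>n. r n \<in> {j. f j = f j0}" by (rule conjunct1, rule conjunct2)
  have X: "\<forall>j. f (r j) = f (r 0)"
  proof
    fix j
    have "f (r j) = f j0" using r(2) by simp
    moreover have "f (r 0) = f j0" using r(2) by simp
    ultimately show "f (r j) = f (r 0)" by (simp only:)
  qed
  show ?thesis by (rule exI[of _ r]) (rule conjI[OF r(1) X])
qed

lemma acc_sub: assumes "L \<in> accumulation_points (bseq p s A)"
  shows "\<exists>e. valid e \<and> e 0 \<ge> 1 \<and> L = xs p A e / (ts s e) powr \<theta>"
proof -
  obtain r where r: "strict_mono r" "\<forall>k. 1 \<le> r k" "(\<lambda>k. bseq p s A (r k)) \<longlonglongrightarrow> L"
    using assms unfolding accumulation_points_def by blast
  have "\<forall>j. \<exists>ek. valid (fst ek) \<and> fst ek 0 \<ge> 1 \<and> Nk s (fst ek) (snd ek) = r j"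
  proof
    fix j
    obtain e k where "valid e" "e 0 \<ge> 1" "Nk s e k = r j" using represent r(2) by blast
    then show "\<exists>ek. valid (fst ek) \<and> fst ek 0 \<ge> 1 \<and> Nk s (fst ek) (snd ek) = r j"
      by (intro exI[of _ "(e, k)"]) simp
  qed
  from choice[OF this] obtain F where F: "\<forall>j. valid (fst (F j)) \<and> fst (F j) 0 \<ge> 1 \<and> Nk s (fst (F j)) (snd (F j)) = r j"
    by blast
  define E where "E j = fst (F j)" for j
  define K where "K j = snd (F j)" for j
  have vE: "valid (E j)" and E0: "E j 0 \<ge> 1" and NE: "Nk s (E j) (K j) = r j" for j
    using F unfolding E_def K_def by auto
  define P where "P = (\<lambda>m (rr::nat \<Rightarrow> nat). \<forall>j. E (rr j) m = E (rr 0) m)"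
  interpret D: subseqs P
  proof
    fix m and \<sigma> :: "nat \<Rightarrow> nat" assume "strict_mono \<sigma>"
    have "E (\<sigma> j) m < s" for j using vE unfolding valid_def by blast
    then obtain r' :: "nat \<Rightarrow> nat" where r': "strict_mono r'" "\<forall>j. E (\<sigma> (r' j)) m = E (\<sigma> (r' 0)) m"
      using const_subseq[of "\<lambda>j. E (\<sigma> j) m"] by blast
    have "P m (\<sigma> \<circ> r')" unfolding P_def o_def by (rule r'(2))
    then show "\<exists>r'. strict_mono r' \<and> P m (\<sigma> \<circ> r')" using r'(1) by (intro exI[of _ r'] conjI)
  qed
  have stable: "P n (ss \<circ> rr)" if "strict_mono rr" "P n ss" for rr ss n
  proof -
    have a: "E (ss j) n = E (ss 0) n" for j using that(2) unfolding P_def by blast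
    show ?thesis unfolding P_def o_def
    proof
      fix j show "E (ss (rr j)) n = E (ss (rr 0)) n" using a[of "rr j"] a[of "rr 0"] by (simp only:)
    qed
  qed
  define dg where "dg = D.diagseq"
  have dgm: "strict_mono dg" unfolding dg_def by (rule D.subseq_diagseq)
  define e where "e k = E (dg (Suc k)) k" for k
  have agree: "E (dg j) k = e k" if "Suc k \<le> j" for j k
  proof -
    have "P k (dg \<circ> ((+) (Suc k)))" unfolding dg_def by (rule D.diagseq_holds[OF stable])
    then have "E ((dg \<circ> ((+) (Suc k))) (j - Suc k)) k = E ((dg \<circ> ((+) (Suc k))) 0) k"
      unfolding P_def by blast
    moreover have "Suc k + (j - Suc k) = j" using that by simp
    ultimately show ?thesis unfolding e_def o_def by simp
  qed
  have ve: "valid e" using vE unfolding valid_def e_def by blast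
  have e0: "e 0 \<ge> 1" using E0 unfolding e_def by blast
  have big: "real (Suc j) \<le> real s ^ Suc (K j)" for j
  proof -
    have "j \<le> r j" using r(1) by (rule seq_suble)
    also have "r j < s ^ Suc (K j)" using Nk_lt[OF vE, of j "K j"] NE by simp
    finally have "Suc j \<le> s ^ Suc (K j)" by simp
    then have "real (Suc j) \<le> real (s ^ Suc (K j))" by (simp only: of_nat_le_iff)
    then show ?thesis by simp
  qed
  have cs: "(\<lambda>j. 1 / real s ^ Suc (K j)) \<longlonglongrightarrow> 0"
  proof (rule tendsto_sandwich[of "\<lambda>_. 0" _ _ "\<lambda>j. inverse (real (Suc j))"])
    show "eventually (\<lambda>j. 0 \<le> 1 / real s ^ Suc (K j)) sequentially" by simp
    have "1 / real s ^ Suc (K j) \<le> inverse (real (Suc j))" for j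
    proof -
      have "inverse (real s ^ Suc (K j)) \<le> inverse (real (Suc j))" using big[of j] by (intro le_imp_inverse_le) auto
      then show ?thesis by (simp add: inverse_eq_divide)
    qed
    then show "eventually (\<lambda>j. 1 / real s ^ Suc (K j) \<le> inverse (real (Suc j))) sequentially"
      by simp
    show "(\<lambda>_. 0) \<longlonglongrightarrow> (0::real)" by simp
    show "(\<lambda>j. inverse (real (Suc j))) \<longlonglongrightarrow> 0" by (rule LIMSEQ_inverse_real_of_nat)
  qed
  have cp: "(\<lambda>j. 1 / real p ^ Suc (K j)) \<longlonglongrightarrow> 0"
  proof (rule tendsto_sandwich[of "\<lambda>_. 0" _ _ "\<lambda>j. 1 / real s ^ Suc (K j)"])
    show "eventually (\<lambda>j. 0 \<le> 1 / real p ^ Suc (K j)) sequentially" by simp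
    have pw: "real s ^ Suc (K j) \<le> real p ^ Suc (K j)" for j using sp by (intro power_mono) auto
    have ppos: "0 < real p ^ Suc (K j) * real s ^ Suc (K j)" for j using p1 s1 by (intro mult_pos_pos) simp_all
    have "1 / real p ^ Suc (K j) \<le> 1 / real s ^ Suc (K j)" for j
      by (rule divide_left_mono[OF pw _ ppos]) simp
    then show "eventually (\<lambda>j. 1 / real p ^ Suc (K j) \<le> 1 / real s ^ Suc (K j)) sequentially"
      by simp
    show "(\<lambda>_. 0) \<longlonglongrightarrow> (0::real)" by simp
    show "(\<lambda>j. 1 / real s ^ Suc (K j)) \<longlonglongrightarrow> 0" by (rule cs)
  qed
  have cs': "(\<lambda>j. 1 / real s ^ Suc (K (dg j))) \<longlonglongrightarrow> 0"
    using LIMSEQ_subseq_LIMSEQ[OF cs dgm] by (simp add: o_def)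
  have cp': "(\<lambda>j. 1 / real p ^ Suc (K (dg j))) \<longlonglongrightarrow> 0"
    using LIMSEQ_subseq_LIMSEQ[OF cp dgm] by (simp add: o_def)
  have X: "(\<lambda>j. Xk (E (dg j)) (K (dg j))) \<longlonglongrightarrow> xs p A e"
  proof (rule approx_lim[OF cp' inv_pow_Suc[OF p1]])
    fix m
    show "eventually (\<lambda>j. \<bar>Xk (E (dg j)) (K (dg j)) - xs p A e\<bar>
             \<le> 1 / real p ^ Suc (K (dg j)) + 1 / real p ^ Suc m) sequentially"
      unfolding eventually_sequentially
    proof (intro exI allI impI)
      fix j assume j: "Suc m \<le> j"
      have "\<bar>xs p A (E (dg j)) - xs p A e\<bar> \<le> 1 / real p ^ Suc m"
        using xs_close[OF vE ve, of "Suc m"] agree j by auto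
      moreover have "\<bar>xs p A (E (dg j)) - Xk (E (dg j)) (K (dg j))\<bar> \<le> 1 / real p ^ Suc (K (dg j))"
        by (rule Xk_approx[OF vE])
      ultimately show "\<bar>Xk (E (dg j)) (K (dg j)) - xs p A e\<bar> \<le> 1 / real p ^ Suc (K (dg j)) + 1 / real p ^ Suc m"
        by (simp add: abs_le_iff)
    qed
  qed
  have T: "(\<lambda>j. Tk (E (dg j)) (K (dg j))) \<longlonglongrightarrow> ts s e"
  proof (rule approx_lim[OF cs' inv_pow_Suc[OF s1]])
    fix m
    show "eventually (\<lambda>j. \<bar>Tk (E (dg j)) (K (dg j)) - ts s e\<bar>
             \<le> 1 / real s ^ Suc (K (dg j)) + 1 / real s ^ Suc m) sequentially"
      unfolding eventually_sequentially
    proof (intro exI allI impI)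
      fix j assume j: "Suc m \<le> j"
      have "\<bar>ts s (E (dg j)) - ts s e\<bar> \<le> 1 / real s ^ Suc m"
        using ts_close[OF vE ve, of "Suc m"] agree j by auto
      moreover have "\<bar>ts s (E (dg j)) - Tk (E (dg j)) (K (dg j))\<bar> \<le> 1 / real s ^ Suc (K (dg j))"
        by (rule Tk_approx[OF vE])
      ultimately show "\<bar>Tk (E (dg j)) (K (dg j)) - ts s e\<bar> \<le> 1 / real s ^ Suc (K (dg j)) + 1 / real s ^ Suc m"
        by (simp add: abs_le_iff)
    qed
  qed
  have "1 / real s \<le> real (e 0) / real s" using e0 s2 by (intro divide_right_mono) auto
  moreover have "0 < 1 / real s" using s2 by simp
  ultimately have tpos: "ts s e > 0" using ts_ge[OF ve] by linarith
  have "(\<lambda>j. Tk (E (dg j)) (K (dg j)) powr \<theta>) \<longlonglongrightarrow> ts s e powr \<theta>"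
    using tendsto_powr[OF T tendsto_const] tpos by simp
  then have lim: "(\<lambda>j. Xk (E (dg j)) (K (dg j)) / Tk (E (dg j)) (K (dg j)) powr \<theta>) \<longlonglongrightarrow> xs p A e / ts s e powr \<theta>"
    using X tpos by (intro tendsto_divide) auto
  have "bseq p s A (r (dg j)) = Xk (E (dg j)) (K (dg j)) / Tk (E (dg j)) (K (dg j)) powr \<theta>" for j
    using bseq_Nk[OF vE E0, of "dg j" "K (dg j)"] NE by simp
  then have lim2: "(\<lambda>j. bseq p s A (r (dg j))) \<longlonglongrightarrow> xs p A e / ts s e powr \<theta>" using lim by simp
  have "(\<lambda>j. bseq p s A (r (dg j))) \<longlonglongrightarrow> L" using LIMSEQ_subseq_LIMSEQ[OF r(3) dgm] by (simp add: o_def)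
  then have "L = xs p A e / ts s e powr \<theta>" using lim2 by (rule LIMSEQ_unique)
  then show ?thesis using ve e0 by blast
qed


lemma aseq_1: "aseq p s A 1 = h 1"
proof -
  have "aseq p s A 1 = h (1 mod s) + p * aseq p s A (1 div s)" by (rule aseq_unf) simp
  then show ?thesis using s2 by (simp add: aseq_0)
qed

lemma aseq_strict: "aseq p s A n < aseq p s A (Suc n)"
proof (induction n rule: less_induct)
  case (less n)
  show ?case
  proof (cases "n = 0")
    case True
    have "h 0 < h 1" using h_mono[of 0 1] s2 by simp
    then show ?thesis using True aseq_1 aseq_0 by simp
  next
    case False
    define q where "q = n div s"
    define r where "r = n mod s"
    have n_eq: "n = r + q * s" unfolding q_def r_def by simp
    have rs: "r < s" unfolding r_def using s2 by simp
    have an: "aseq p s A n = h r + p * aseq p s A q"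
      unfolding q_def r_def by (rule aseq_unf[OF False])
    show ?thesis
    proof (cases "Suc r < s")
      case True
      have e: "Suc n = Suc r + q * s" using n_eq by simp
      have m0: "(Suc r + q * s) mod s = Suc r mod s" by (rule mod_mult_self1)
      have m: "Suc n mod s = Suc r" unfolding e m0 using True by simp
      have d0: "(Suc r + q * s) div s = q + Suc r div s" by (rule div_mult_self1) (use s2 in simp)
      have d: "Suc n div s = q" unfolding e d0 using True by simp
      have "aseq p s A (Suc n) = h (Suc r) + p * aseq p s A q"
        using aseq_unf[of "Suc n"] m d by simp
      moreover have "h r < h (Suc r)" using h_mono[of r "Suc r"] True by simp
      ultimately show ?thesis using an by simp
    next
      case False
      then have sr: "Suc r = s" using rs by simp
      have e: "Suc n = 0 + Suc q * s" using n_eq sr by simp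
      have m: "Suc n mod s = 0" unfolding e by simp
      have d: "Suc n div s = Suc q" using s2 unfolding e by simp
      have asn: "aseq p s A (Suc n) = h 0 + p * aseq p s A (Suc q)"
        using aseq_unf[of "Suc n"] m d by simp
      have qn: "q < n" unfolding q_def using \<open>n \<noteq> 0\<close> s2 by simp
      have "aseq p s A q < aseq p s A (Suc q)" by (rule less.IH[OF qn])
      then have "p * (aseq p s A q + 1) \<le> p * aseq p s A (Suc q)" by (intro mult_left_mono) auto
      moreover have "h r < p" using h_lt rs by blast
      ultimately show ?thesis using an asn by (simp add: algebra_simps)
    qed
  qed
qed

lemma aseq_mono_Suc: "aseq p s A n \<le> aseq p s A (Suc n)"
  using aseq_strict[of n] by simp

lemma aseq_lt: "n < s ^ Suc k \<Longrightarrow> aseq p s A n < p ^ Suc k"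
proof (induction k arbitrary: n)
  case 0
  show ?case
  proof (cases "n = 0")
    case True then show ?thesis using p3 by (simp add: aseq_0)
  next
    case False
    have "aseq p s A n = h (n mod s) + p * aseq p s A (n div s)" by (rule aseq_unf[OF False])
    moreover have "n mod s = n" "n div s = 0" using 0 by auto
    moreover have "h n < p" using h_lt 0 by simp
    ultimately show ?thesis by (simp add: aseq_0)
  qed
next
  case (Suc k)
  show ?case
  proof (cases "n = 0")
    case True then show ?thesis using p3 by (simp add: aseq_0)
  next
    case False
    have an: "aseq p s A n = h (n mod s) + p * aseq p s A (n div s)" by (rule aseq_unf[OF False])
    have "n < s ^ Suc k * s" using Suc.prems by (simp add: mult.commute)
    then have "n div s < s ^ Suc k" by (rule less_mult_imp_div_less)
    then have "aseq p s A (n div s) < p ^ Suc k" by (rule Suc.IH)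
    then have "p * (aseq p s A (n div s) + 1) \<le> p * p ^ Suc k" by (intro mult_left_mono) auto
    moreover have "h (n mod s) < p" using h_lt s2 by simp
    ultimately show ?thesis using an by (simp add: algebra_simps)
  qed
qed

lemma aseq_pow: "h 1 * p ^ k \<le> aseq p s A (s ^ k)"
proof (induction k)
  case 0 then show ?case using aseq_1 by simp
next
  case (Suc k)
  have nz: "s ^ Suc k \<noteq> 0" using s2 by simp
  have m: "s ^ Suc k mod s = 0" by simp
  have d: "s ^ Suc k div s = s ^ k" using s2 by simp
  have eq: "aseq p s A (s ^ Suc k) = h 0 + p * aseq p s A (s ^ k)"
    using aseq_unf[OF nz] m d by simp
  have "h 1 * p ^ Suc k = p * (h 1 * p ^ k)" by (simp add: algebra_simps)
  also have "\<dots> \<le> p * aseq p s A (s ^ k)" using Suc by (rule mult_left_mono) simp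
  also have "\<dots> \<le> h 0 + p * aseq p s A (s ^ k)" by simp
  also have "\<dots> = aseq p s A (s ^ Suc k)" using eq by simp
  finally show ?case .
qed

lemma theta_pos: "\<theta> > 0" unfolding \<theta>_def using s2 p3 by simp

lemma b_le_p: assumes "s ^ k \<le> n" "n < s ^ Suc k" shows "bseq p s A n \<le> real p"
proof -
  have "1 \<le> s ^ k" using s2 by simp
  then have n1: "real n \<ge> 1" using assms(1) by linarith
  have "real s ^ k \<le> real n" using assms(1) by (metis of_nat_le_iff of_nat_power)
  then have "(real s ^ k) powr \<theta> \<le> real n powr \<theta>" using theta_pos by (intro powr_mono2) auto
  then have den: "real p ^ k \<le> real n powr \<theta>" by (simp only: spow_powr)
  have "aseq p s A n < p ^ Suc k" using aseq_lt[OF assms(2)] .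
  then have num: "real (aseq p s A n) \<le> real p ^ Suc k" by (metis less_imp_le of_nat_le_iff of_nat_power)
  have ppos: "0 < real p ^ k" using p3 by simp
  have "bseq p s A n = real (aseq p s A n) / real n powr \<theta>" unfolding bseq_def \<theta>_def ..
  also have "\<dots> \<le> real p ^ Suc k / real p ^ k"
    using num den ppos by (intro frac_le) auto
  also have "\<dots> = real p" using p3 by simp
  finally show ?thesis .
qed

lemma b_nonneg: "0 \<le> bseq p s A n" unfolding bseq_def by simp

lemma b_pow: "real (h 1) \<le> bseq p s A (s ^ k)"
proof -
  have "real (s ^ k) powr \<theta> = real p ^ k" by (simp add: spow_powr)
  moreover have "real (h 1) * real p ^ k \<le> real (aseq p s A (s ^ k))"
    using aseq_pow[of k] by (metis of_nat_le_iff of_nat_mult of_nat_power)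
  moreover have "0 < real p ^ k" using p3 by simp
  ultimately show ?thesis unfolding bseq_def \<theta>_def[symmetric] by (simp add: field_simps)
qed

lemma b_step: assumes "n \<ge> 1"
  shows "bseq p s A n * (real n / real (Suc n)) powr \<theta> \<le> bseq p s A (Suc n)"
proof -
  have np: "0 < real n powr \<theta>" using assms by simp
  have sp: "0 < real (Suc n) powr \<theta>" by simp
  have "bseq p s A n * (real n / real (Suc n)) powr \<theta>
      = real (aseq p s A n) / real (Suc n) powr \<theta>"
    unfolding bseq_def \<theta>_def[symmetric] powr_divide using np sp by (simp add: field_simps)
  also have "\<dots> \<le> real (aseq p s A (Suc n)) / real (Suc n) powr \<theta>"
    using aseq_mono_Suc[of n] sp by (intro divide_right_mono) auto
  also have "\<dots> = bseq p s A (Suc n)" unfolding bseq_def \<theta>_def ..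
  finally show ?thesis .
qed

lemma b_end: "bseq p s A (s ^ Suc k - 1) \<le> 1 / (1 - 1 / real s ^ Suc k) powr \<theta>"
proof -
  have g: "2 \<le> s ^ Suc k"
  proof -
    have "1 \<le> s ^ k" using s2 by simp
    then have "s * 1 \<le> s * s ^ k" by (rule mult_left_mono) simp
    then have "s \<le> s ^ Suc k" by simp
    then show ?thesis using s2 by linarith
  qed
  have rn: "real (s ^ Suc k - 1) = (1 - 1 / real s ^ Suc k) * real s ^ Suc k"
    using g s2 by (simp add: of_nat_diff field_simps)
  have qpos: "0 < 1 - 1 / real s ^ Suc k"
  proof -
    have "1 < real s ^ Suc k" using s1 by (rule one_less_power) simp
    then show ?thesis by (simp add: field_simps)
  qed
  have "real (s ^ Suc k - 1) powr \<theta> = ((1 - 1 / real s ^ Suc k) * real s ^ Suc k) powr \<theta>"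
    by (simp only: rn)
  also have "\<dots> = (1 - 1 / real s ^ Suc k) powr \<theta> * (real s ^ Suc k) powr \<theta>"
    using qpos by (simp add: powr_mult)
  also have "\<dots> = (1 - 1 / real s ^ Suc k) powr \<theta> * real p ^ Suc k" by (simp only: spow_powr)
  finally have "real (s ^ Suc k - 1) powr \<theta> = (1 - 1 / real s ^ Suc k) powr \<theta> * real p ^ Suc k" .
  moreover have "real (aseq p s A (s ^ Suc k - 1)) \<le> real p ^ Suc k"
  proof -
    have "s ^ Suc k - 1 < s ^ Suc k" using g by simp
    then have "aseq p s A (s ^ Suc k - 1) < p ^ Suc k" by (rule aseq_lt)
    then show ?thesis by (metis less_imp_le of_nat_le_iff of_nat_power)
  qed
  moreover have "0 < (1 - 1 / real s ^ Suc k) powr \<theta>"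
  proof -
    have "1 - 1 / real s ^ Suc k \<noteq> 0" using qpos by linarith
    then show ?thesis by (simp only: powr_gt_zero not_False_eq_True)
  qed
  moreover have "0 < real p ^ Suc k" using p3 by simp
  ultimately show ?thesis unfolding bseq_def \<theta>_def[symmetric]
    by (simp add: field_simps)
qed

lemma b_end_lim: "(\<lambda>k. 1 / (1 - 1 / real s ^ Suc k) powr \<theta>) \<longlonglongrightarrow> 1"
proof -
  have "(\<lambda>k. 1 - 1 / real s ^ Suc k) \<longlonglongrightarrow> 1 - 0"
    by (intro tendsto_diff tendsto_const inv_pow_Suc[OF s1])
  then have "(\<lambda>k. (1 - 1 / real s ^ Suc k) powr \<theta>) \<longlonglongrightarrow> 1 powr \<theta>"
    by (intro tendsto_powr) auto
  then have "(\<lambda>k. 1 / (1 - 1 / real s ^ Suc k) powr \<theta>) \<longlonglongrightarrow> 1 / 1 powr \<theta>"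
    by (intro tendsto_divide tendsto_const) auto
  then show ?thesis by simp
qed

lemma degenerate: assumes h12: "h 1 \<ge> 2" shows "real (h 1) \<in> accumulation_points (bseq p s A)"
proof -
  define H where "H = real (h 1)"
  have "eventually (\<lambda>k. 1 / (1 - 1 / real s ^ Suc k) powr \<theta> < H) sequentially"
    using b_end_lim h12 unfolding H_def by (intro order_tendstoD(2)) auto
  then obtain K0 where K0: "\<And>k. k \<ge> K0 \<Longrightarrow> 1 / (1 - 1 / real s ^ Suc k) powr \<theta> < H"
    unfolding eventually_sequentially by blast
  define S where "S k = {n. s ^ k \<le> n \<and> n < s ^ Suc k \<and> H \<le> bseq p s A n}" for k
  define nn where "nn k = Max (S k)" for k
  have lt: "s ^ k < s ^ Suc k" for k using s2 by simp
  have finS: "finite (S k)" for k unfolding S_def by (rule finite_subset[of _ "{..<s ^ Suc k}"]) auto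
  have inS: "s ^ k \<in> S k" for k unfolding S_def H_def using lt b_pow by auto
  have nnS: "nn k \<in> S k" for k unfolding nn_def using finS inS by (intro Max_in) auto
  have nn_lo: "s ^ k \<le> nn k" and nn_hi: "nn k < s ^ Suc k" and nn_H: "H \<le> bseq p s A (nn k)" for k
    using nnS[of k] unfolding S_def by auto
  have nxt: "nn k + 1 < s ^ Suc k \<and> bseq p s A (Suc (nn k)) < H" if k: "k \<ge> K0" for k
  proof -
    have "bseq p s A (s ^ Suc k - 1) < H" using b_end[of k] K0[OF k] by linarith
    then have "nn k \<noteq> s ^ Suc k - 1" using nn_H[of k] by auto
    then have a: "nn k + 1 < s ^ Suc k" using nn_hi[of k] by linarith
    have "\<not> (H \<le> bseq p s A (Suc (nn k)))"
    proof
      assume "H \<le> bseq p s A (Suc (nn k))"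
      then have "Suc (nn k) \<in> S k" unfolding S_def using a nn_lo[of k] by auto
      then have "Suc (nn k) \<le> nn k" unfolding nn_def using finS by (intro Max_ge) auto
      then show False by simp
    qed
    then show ?thesis using a by simp
  qed
  define w where "w n = real p * (1 - (real n / real (Suc n)) powr \<theta>)" for n
  have bound: "bseq p s A (nn k) \<le> H + w (nn k)" if k: "k \<ge> K0" for k
  proof -
    define n where "n = nn k"
    have "1 \<le> s ^ k" using s2 by simp
    then have n1: "n \<ge> 1" unfolding n_def using nn_lo[of k] by linarith
    define \<rho> where "\<rho> = (real n / real (Suc n)) powr \<theta>"
    have r1: "\<rho> \<le> 1" unfolding \<rho>_def using theta_pos by (intro powr_le1) auto
    have b1: "bseq p s A n \<le> real p" unfolding n_def using nn_lo nn_hi by (rule b_le_p)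
    have "bseq p s A n * \<rho> \<le> bseq p s A (Suc n)" unfolding \<rho>_def by (rule b_step[OF n1])
    moreover have "bseq p s A (Suc n) < H" using nxt[OF k] unfolding n_def by blast
    moreover have "bseq p s A n * (1 - \<rho>) \<le> real p * (1 - \<rho>)"
      using b1 r1 by (intro mult_right_mono) auto
    ultimately have "bseq p s A n \<le> H + real p * (1 - \<rho>)" by (simp add: algebra_simps)
    then show ?thesis unfolding w_def n_def \<rho>_def .
  qed
  define r where "r j = nn (j + K0)" for j
  have rm: "strict_mono r"
  proof (rule strict_monoI_Suc)
    fix j
    have "nn (j + K0) < s ^ Suc (j + K0)" by (rule nn_hi)
    also have "\<dots> \<le> nn (Suc (j + K0))" by (rule nn_lo)
    finally show "r j < r (Suc j)" unfolding r_def by simp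
  qed
  have r1: "1 \<le> r j" for j
  proof -
    have "1 \<le> s ^ (j + K0)" using s2 by simp
    then show ?thesis unfolding r_def using nn_lo[of "j + K0"] by linarith
  qed
  have wl: "w \<longlonglongrightarrow> 0"
  proof -
    have "(\<lambda>n. (real n / real (Suc n)) powr \<theta>) \<longlonglongrightarrow> 1 powr \<theta>"
      using LIMSEQ_n_over_Suc_n by (intro tendsto_powr) auto
    then have "(\<lambda>n. real p * (1 - (real n / real (Suc n)) powr \<theta>)) \<longlonglongrightarrow> real p * (1 - 1 powr \<theta>)"
      by (intro tendsto_mult tendsto_diff tendsto_const)
    then show ?thesis unfolding w_def by simp
  qed
  have wr: "(\<lambda>j. w (r j)) \<longlonglongrightarrow> 0" using LIMSEQ_subseq_LIMSEQ[OF wl rm] by (simp add: o_def)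
  have "(\<lambda>j. bseq p s A (r j)) \<longlonglongrightarrow> H"
  proof (rule tendsto_sandwich[of "\<lambda>_. H" _ _ "\<lambda>j. H + w (r j)"])
    show "eventually (\<lambda>j. H \<le> bseq p s A (r j)) sequentially" unfolding r_def using nn_H by simp
    show "eventually (\<lambda>j. bseq p s A (r j) \<le> H + w (r j)) sequentially"
      unfolding r_def using bound by simp
    show "(\<lambda>j. H + w (r j)) \<longlonglongrightarrow> H" using tendsto_add[OF tendsto_const wr] by simp
  qed simp
  then show ?thesis unfolding accumulation_points_def H_def using rm r1 by blast
qed

lemma one_over_s_powr: "(1 / real s) powr \<theta> = 1 / real p"
  using s2 by (simp add: powr_divide s_powr)

lemma xs_const: "xs p A (\<lambda>_. j) = real (h j) / (real p - 1)"
  using geo_sum[OF p1, of "real (h j)"] unfolding xs_def by (simp add: sums_iff)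

lemma ts_const: "ts s (\<lambda>_. j) = real j / (real s - 1)"
  using geo_sum[OF s1, of "real j"] unfolding ts_def by (simp add: sums_iff)

lemma cantor_repr: assumes "x \<in> cantor_set p A" shows "\<exists>e. valid e \<and> x = xs p A e"
proof -
  obtain d where d: "\<forall>i. d i \<in> A" "x = (\<Sum>i. real (d i) / real p ^ Suc i)"
    using assms unfolding cantor_set_def by blast
  define e where "e i = (SOME j. j < s \<and> h j = d i)" for i
  have e: "e i < s \<and> h (e i) = d i" for i
  proof -
    have "\<exists>j. j < s \<and> h j = d i" using h_surj d(1) by blast
    then show ?thesis unfolding e_def by (rule someI_ex)
  qed
  have "valid e" using e unfolding valid_def by blast
  moreover have "(\<lambda>i. real (h (e i)) / real p ^ Suc i) = (\<lambda>i. real (d i) / real p ^ Suc i)"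
    using e by simp
  then have "x = xs p A e" unfolding xs_def d(2) by simp
  ultimately show ?thesis by blast
qed

lemma point_acc: assumes xC: "x \<in> cantor_set p A" and xl: "real (h 1) / real p \<le> x"
  shows "x / (G x) powr \<theta> \<in> accumulation_points (bseq p s A)"
proof -
  obtain e where v: "valid e" and xe: "x = xs p A e" using cantor_repr[OF xC] by blast
  show ?thesis
  proof (cases "e 0 \<ge> 1")
    case True
    then show ?thesis using caseA[OF v] xe by simp
  next
    case False
    then have e0: "e 0 = 0" by simp
    define e' where "e' = (\<lambda>i. e (Suc i))"
    have v': "valid e'" unfolding e'_def by (rule valid_shift[OF v])
    have x1: "x = (real (h 0) + xs p A e') / real p" using xs_shift[OF v] e0 xe unfolding e'_def by simp
    have h01: "h 0 < h 1" using h_mono[of 0 1] s2 by simp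
    have "real (h 1) \<le> real (h 0) + xs p A e'" using xl x1 p3 by (simp add: divide_right_mono_neg field_simps)
    moreover have "xs p A e' \<le> 1" by (rule xs_bounds(2)[OF v'])
    moreover have "real (h 0) + 1 \<le> real (h 1)" using h01 by simp
    ultimately have hh: "real (h 1) = real (h 0) + 1" and xe1: "xs p A e' = 1" by linarith+
    have xval: "x = real (h 1) / real p" using x1 hh xe1 by simp
    have Gle: "G x \<le> 1 / real s"
    proof -
      have "G x = ts s e" using G_xs[OF v] xe by simp
      also have "\<dots> = (0 + ts s e') / real s" using ts_shift[OF v] e0 unfolding e'_def by simp
      also have "\<dots> \<le> 1 / real s" using ts_bounds(2)[OF v'] s2 by (intro divide_right_mono) auto
      finally show ?thesis .
    qed
    define es where "es = (\<lambda>i::nat. if i = 0 then 0 else s - 1)"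
    have vs: "valid es" unfolding valid_def es_def using s2 by auto
    have es_sh: "(\<lambda>i. es (Suc i)) = (\<lambda>_. s - 1)" unfolding es_def by simp
    have "xs p A es = (real (h 0) + real (h (s - 1)) / (real p - 1)) / real p"
      using xs_shift[OF vs] unfolding es_sh xs_const by (simp add: es_def)
    also have "\<dots> \<le> (real (h 0) + 1) / real p"
    proof -
      have "h (s - 1) < p" using h_lt s2 by simp
      then have "real (h (s - 1)) \<le> real p - 1" by linarith
      then have "real (h (s - 1)) / (real p - 1) \<le> 1" using p3 by simp
      then show ?thesis using p3 by (intro divide_right_mono) auto
    qed
    finally have "xs p A es \<le> x" using xval hh by simp
    then have "G (xs p A es) \<le> G x" by (rule G_mono)
    moreover have "G (xs p A es) = 1 / real s"
    proof -
      have "G (xs p A es) = ts s es" by (rule G_xs[OF vs])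
      also have "\<dots> = (0 + ts s (\<lambda>_. s - 1)) / real s"
        using ts_shift[OF vs] unfolding es_sh by (simp add: es_def)
      also have "ts s (\<lambda>_. s - 1) = 1" unfolding ts_const using s2 by (simp add: of_nat_diff)
      finally show ?thesis by simp
    qed
    ultimately have Gx: "G x = 1 / real s" using Gle by linarith
    show ?thesis
    proof (cases "h 1 \<ge> 2")
      case True
      have gp: "(G x) powr \<theta> = 1 / real p" unfolding Gx by (rule one_over_s_powr)
      have "x / (G x) powr \<theta> = x / (1 / real p)" by (simp only: gp)
      also have "\<dots> = real (h 1)" using xval p3 by simp
      finally have "x / (G x) powr \<theta> = real (h 1)" .
      then show ?thesis using degenerate[OF True] by simp
    next
      case False
      then have h1: "h 1 = 1" using h01 by simp
      then have h0: "h 0 = 0" using h01 by simp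
      define eo where "eo = (\<lambda>i::nat. if i = 0 then (1::nat) else 0)"
      have vo: "valid eo" unfolding valid_def eo_def using s2 by auto
      have eo_sh: "(\<lambda>i. eo (Suc i)) = (\<lambda>_. 0)" unfolding eo_def by simp
      have "xs p A eo = (real (h 1) + xs p A (\<lambda>_. 0)) / real p"
        using xs_shift[OF vo] unfolding eo_sh by (simp add: eo_def)
      also have "\<dots> = x" using xval h0 unfolding xs_const by simp
      finally have "xs p A eo = x" .
      then show ?thesis using caseA[OF vo] by (simp add: eo_def)
    qed
  qed
qed

lemma acc_in: assumes "L \<in> accumulation_points (bseq p s A)"
  shows "\<exists>x. L = x / (measure \<mu> {0..x}) powr (log (real s) (real p)) \<and>
            x \<in> cantor_set p A \<inter> {real (h 1) / real p .. 1}"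
proof -
  obtain e where v: "valid e" and e0: "e 0 \<ge> 1" and L: "L = xs p A e / (ts s e) powr \<theta>"
    using acc_sub[OF assms] by blast
  define x where "x = xs p A e"
  have xC: "x \<in> cantor_set p A"
  proof -
    have hA: "\<forall>i. h (e i) \<in> A" using h_in v unfolding valid_def by blast
    show ?thesis unfolding cantor_set_def mem_Collect_eq x_def xs_def
      by (rule exI[of _ "\<lambda>i. h (e i)"]) (simp add: hA)
  qed
  have "real (h 1) \<le> real (h (e 0))"
    using h_mono_le[of 1 "e 0"] e0 v unfolding valid_def by simp
  then have "real (h 1) / real p \<le> real (h (e 0)) / real p" by (rule divide_right_mono) simp
  then have xl: "real (h 1) / real p \<le> x" using xs_ge[OF v] unfolding x_def by linarith
  have xu: "x \<le> 1" unfolding x_def by (rule xs_bounds(2)[OF v])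
  have x0: "0 \<le> x" unfolding x_def by (rule xs_bounds(1)[OF v])
  have "measure \<mu> {0..x} = ts s e" using meas_Icc[OF x0] G_xs[OF v] unfolding x_def by simp
  then have "L = x / (measure \<mu> {0..x}) powr (log (real s) (real p))" using L unfolding x_def \<theta>_def by simp
  moreover have "x \<in> cantor_set p A \<inter> {real (h 1) / real p .. 1}" using xC xl xu by simp
  ultimately show ?thesis by (intro exI[of _ x] conjI)
qed

end

theorem theorem1:
  fixes p s :: nat and A :: "nat set" and \<mu> :: "real measure"
  assumes "p \<ge> 3" and "2 \<le> s" and "s < p"
    and "A \<subseteq> {0..<p}" and "card A = s"
    and "self_similar_measure p s A \<mu>"
  shows "{x / (measure \<mu> {0..x}) powr (log (real s) (real p)) | x.
            x \<in> cantor_set p A \<inter> {real (hmap A 1) / real p .. 1}}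
         = accumulation_points (bseq p s A)"
proof -
  interpret S: setting p s A \<mu> by (rule setting.intro[OF assms])
  show ?thesis
  proof (intro subset_antisym subsetI)
    fix L assume "L \<in> {x / (measure \<mu> {0..x}) powr (log (real s) (real p)) | x.
            x \<in> cantor_set p A \<inter> {real (hmap A 1) / real p .. 1}}"
    then have "\<exists>x. L = x / (measure \<mu> {0..x}) powr (log (real s) (real p)) \<and>
            x \<in> cantor_set p A \<inter> {real (hmap A 1) / real p .. 1}" unfolding mem_Collect_eq .
    then obtain x where x: "L = x / (measure \<mu> {0..x}) powr (log (real s) (real p)) \<and>
            x \<in> cantor_set p A \<inter> {real (hmap A 1) / real p .. 1}" by (elim exE)
    then have Lx: "L = x / (measure \<mu> {0..x}) powr (log (real s) (real p))"
      and xC: "x \<in> cantor_set p A" and xl: "real (hmap A 1) / real p \<le> x" by auto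
    have "0 \<le> real (hmap A 1) / real p" by simp
    then have x0: "0 \<le> x" using xl by linarith
    have "L = x / (S.G x) powr S.\<theta>" using Lx S.meas_Icc[OF x0] unfolding S.\<theta>_def by simp
    then show "L \<in> accumulation_points (bseq p s A)" using S.point_acc[OF xC xl] by simp
  next
    fix L assume L: "L \<in> accumulation_points (bseq p s A)"
    show "L \<in> {x / (measure \<mu> {0..x}) powr (log (real s) (real p)) | x.
            x \<in> cantor_set p A \<inter> {real (hmap A 1) / real p .. 1}}"
      unfolding mem_Collect_eq by (rule S.acc_in[OF L])
  qed
qed

end
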